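(* Let $\mathcal{C}$ be a non-empty k-category and $\mathcal{D}$ a perfect k-category. Then the k-category $\mathrm{Func}(\mathcal{C},\mathcal{D})$ is perfect.
   Context: A k-category is a small category whose object and morphism sets are k-spaces (compactly generated Hausdorff) such that the source, target, identity and composition maps are continuous (products in the category of k-spaces). A non-empty k-category $\mathcal{C}$ is perfect when the map $\mathrm{Mor}(\mathcal{C})\to\mathrm{Ob}(\mathcal{C})\times\mathrm{Ob}(\mathcal{C})$, $f\mapsto(\text{source}(f),\text{target}(f))$, is a homeomorphism. $\mathrm{Func}(\mathcal{C},\mathcal{D})$ is the k-category whose objects are the continuous functors $\mathcal{C}\to\mathcal{D}$, topologized as a subspace of the k-space $\mathrm{Mor}(\mathcal{D})^{\mathrm{Mor}(\mathcal{C})}$, and whose morphisms are continuous natural transformations, topologized as a closed subspace of $\mathrm{Ob}(\mathrm{Func})\times\mathrm{Ob}(\mathrm{Func})\times\mathrm{Mor}(\mathcal{D})^{\mathrm{Ob}(\mathcal{C})}$. *)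

theory Defs
  imports "HOL-Analysis.Analysis"
begin

definition kspace :: "'a topology \<Rightarrow> bool" where
  "kspace X \<longleftrightarrow> Hausdorff_space X \<and>
     (\<forall>U. U \<subseteq> topspace X \<longrightarrow>
          (\<forall>K. compactin X K \<longrightarrow> openin (subtopology X K) (U \<inter> K)) \<longrightarrow> openin X U)"

definition kify :: "'a topology \<Rightarrow> 'a topology" where
  "kify X = topology (\<lambda>U. U \<subseteq> topspace X \<and>
      (\<forall>K. compactin X K \<longrightarrow> openin (subtopology X K) (U \<inter> K)))"

text \<open>Binary product in the category of k-spaces: k-ification of the product topology.\<close>
definition kprod :: "'a topology \<Rightarrow> 'b topology \<Rightarrow> ('a \<times> 'b) topology" where
  "kprod X Y = kify (prod_topology X Y)"

text \<open>Compact-open topology on the continuous maps X \<rightarrow> Y (maps represented as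
functions that are extensional, i.e. undefined outside topspace X).\<close>
definition cmaps :: "'a topology \<Rightarrow> 'b topology \<Rightarrow> ('a \<Rightarrow> 'b) set" where
  "cmaps X Y = {f. continuous_map X Y f \<and> f \<in> extensional (topspace X)}"

definition compact_open :: "'a topology \<Rightarrow> 'b topology \<Rightarrow> ('a \<Rightarrow> 'b) topology" where
  "compact_open X Y = topology_generated_by
     (insert (cmaps X Y) {{f \<in> cmaps X Y. f ` K \<subseteq> U} | K U. compactin X K \<and> openin Y U})"

text \<open>The exponential object Y^X in k-spaces: k-ification of the compact-open topology.\<close>
definition kmap :: "'a topology \<Rightarrow> 'b topology \<Rightarrow> ('a \<Rightarrow> 'b) topology" where
  "kmap X Y = kify (compact_open X Y)"

text \<open>A small category with object set topspace (obT C), morphism set topspace (morT C);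
comp g f is the composite g \<circ> f, defined when tgt f = src g.\<close>
record ('o, 'm) kcat =
  obT :: "'o topology"
  morT :: "'m topology"
  src :: "'m \<Rightarrow> 'o"
  tgt :: "'m \<Rightarrow> 'o"
  ident :: "'o \<Rightarrow> 'm"
  comp :: "'m \<Rightarrow> 'm \<Rightarrow> 'm"

abbreviation Ob :: "('o, 'm, 'z) kcat_scheme \<Rightarrow> 'o set" where
  "Ob C \<equiv> topspace (obT C)"

abbreviation Mor :: "('o, 'm, 'z) kcat_scheme \<Rightarrow> 'm set" where
  "Mor C \<equiv> topspace (morT C)"

definition composable :: "('o, 'm, 'z) kcat_scheme \<Rightarrow> ('m \<times> 'm) set" where
  "composable C = {(g, f). g \<in> Mor C \<and> f \<in> Mor C \<and> src C g = tgt C f}"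

definition kcategory :: "('o, 'm, 'z) kcat_scheme \<Rightarrow> bool" where
  "kcategory C \<longleftrightarrow>
     kspace (obT C) \<and> kspace (morT C) \<and>
     continuous_map (morT C) (obT C) (src C) \<and>
     continuous_map (morT C) (obT C) (tgt C) \<and>
     continuous_map (obT C) (morT C) (ident C) \<and>
     continuous_map (subtopology (kprod (morT C) (morT C)) (composable C)) (morT C)
        (\<lambda>(g, f). comp C g f) \<and>
     (\<forall>x \<in> Ob C. src C (ident C x) = x \<and> tgt C (ident C x) = x) \<and>
     (\<forall>(g, f) \<in> composable C. src C (comp C g f) = src C f \<and> tgt C (comp C g f) = tgt C g) \<and>
     (\<forall>f \<in> Mor C. comp C f (ident C (src C f)) = f \<and> comp C (ident C (tgt C f)) f = f) \<and>
     (\<forall>h g f. (h, g) \<in> composable C \<longrightarrow> (g, f) \<in> composable C \<longrightarrow>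
         comp C h (comp C g f) = comp C (comp C h g) f)"

definition perfect :: "('o, 'm, 'z) kcat_scheme \<Rightarrow> bool" where
  "perfect C \<longleftrightarrow> Ob C \<noteq> {} \<and>
     homeomorphic_map (morT C) (kprod (obT C) (obT C)) (\<lambda>f. (src C f, tgt C f))"

text \<open>A continuous functor is represented by its morphism map (extensional on Mor C);
its object map is determined by it.\<close>
definition fob :: "('oc, 'mc, 'z1) kcat_scheme \<Rightarrow> ('od, 'md, 'z2) kcat_scheme
     \<Rightarrow> ('mc \<Rightarrow> 'md) \<Rightarrow> 'oc \<Rightarrow> 'od" where
  "fob C D F x = src D (F (ident C x))"

definition functors :: "('oc, 'mc, 'z1) kcat_scheme \<Rightarrow> ('od, 'md, 'z2) kcat_scheme
     \<Rightarrow> ('mc \<Rightarrow> 'md) set" where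
  "functors C D = {F. F \<in> extensional (Mor C) \<and> continuous_map (morT C) (morT D) F \<and>
      (\<forall>x \<in> Ob C. fob C D F x \<in> Ob D \<and> F (ident C x) = ident D (fob C D F x)) \<and>
      (\<forall>f \<in> Mor C. src D (F f) = fob C D F (src C f) \<and> tgt D (F f) = fob C D F (tgt C f)) \<and>
      (\<forall>(g, f) \<in> composable C. F (comp C g f) = comp D (F g) (F f))}"

definition nat_trans :: "('oc, 'mc, 'z1) kcat_scheme \<Rightarrow> ('od, 'md, 'z2) kcat_scheme
     \<Rightarrow> ('mc \<Rightarrow> 'md) \<Rightarrow> ('mc \<Rightarrow> 'md) \<Rightarrow> ('oc \<Rightarrow> 'md) \<Rightarrow> bool" where
  "nat_trans C D F G \<eta> \<longleftrightarrow> \<eta> \<in> extensional (Ob C) \<and> continuous_map (obT C) (morT D) \<eta> \<and>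
      (\<forall>x \<in> Ob C. src D (\<eta> x) = fob C D F x \<and> tgt D (\<eta> x) = fob C D G x) \<and>
      (\<forall>f \<in> Mor C. comp D (\<eta> (tgt C f)) (F f) = comp D (G f) (\<eta> (src C f)))"

definition FuncObT :: "('oc, 'mc, 'z1) kcat_scheme \<Rightarrow> ('od, 'md, 'z2) kcat_scheme
     \<Rightarrow> ('mc \<Rightarrow> 'md) topology" where
  "FuncObT C D = subtopology (kmap (morT C) (morT D)) (functors C D)"

text \<open>The k-category Func(C,D): objects are continuous functors (subspace of Mor(D)^Mor(C)),
morphisms are triples (F, G, eta) of continuous natural transformations, as a subspace of
Ob(Func) \<times> Ob(Func) \<times> Mor(D)^Ob(C) (products and exponentials in k-spaces).\<close>
definition Func :: "('oc, 'mc, 'z1) kcat_scheme \<Rightarrow> ('od, 'md, 'z2) kcat_scheme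
     \<Rightarrow> ('mc \<Rightarrow> 'md, ('mc \<Rightarrow> 'md) \<times> ('mc \<Rightarrow> 'md) \<times> ('oc \<Rightarrow> 'md)) kcat" where
  "Func C D =
     \<lparr> obT = FuncObT C D,
       morT = subtopology (kprod (FuncObT C D) (kprod (FuncObT C D) (kmap (obT C) (morT D))))
                {(F, G, \<eta>). F \<in> functors C D \<and> G \<in> functors C D \<and> nat_trans C D F G \<eta>},
       src = (\<lambda>(F, G, \<eta>). F),
       tgt = (\<lambda>(F, G, \<eta>). G),
       ident = (\<lambda>F. (F, F, \<lambda>x \<in> Ob C. F (ident C x))),
       comp = (\<lambda>(G, H, \<theta>) (F, G', \<eta>). (F, H, \<lambda>x \<in> Ob C. comp D (\<theta> x) (\<eta> x))) \<rparr>"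

end

theory Submission
  imports Defs
begin

lemma istopology_kify:
  "istopology (\<lambda>U. U \<subseteq> topspace X \<and>
      (\<forall>K. compactin X K \<longrightarrow> openin (subtopology X K) (U \<inter> K)))"
proof -
  have 1: "S \<inter> T \<subseteq> topspace X \<and> (\<forall>K. compactin X K \<longrightarrow> openin (subtopology X K) (S \<inter> T \<inter> K))"
    if a: "S \<subseteq> topspace X \<and> (\<forall>K. compactin X K \<longrightarrow> openin (subtopology X K) (S \<inter> K))"
     "T \<subseteq> topspace X \<and> (\<forall>K. compactin X K \<longrightarrow> openin (subtopology X K) (T \<inter> K))" for S T
  proof (intro conjI allI impI)
    fix K assume "compactin X K"
    then have "openin (subtopology X K) ((S \<inter> K) \<inter> (T \<inter> K))" using a by blast
    moreover have "(S \<inter> K) \<inter> (T \<inter> K) = S \<inter> T \<inter> K" by blast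
    ultimately show "openin (subtopology X K) (S \<inter> T \<inter> K)" by simp
  qed (use a in auto)
  have 2: "\<Union>\<K> \<subseteq> topspace X \<and> (\<forall>K. compactin X K \<longrightarrow> openin (subtopology X K) (\<Union>\<K> \<inter> K))"
    if a: "\<forall>U\<in>\<K>. U \<subseteq> topspace X \<and> (\<forall>K. compactin X K \<longrightarrow> openin (subtopology X K) (U \<inter> K))" for \<K>
  proof (intro conjI allI impI)
    fix K assume "compactin X K"
    then have "openin (subtopology X K) (\<Union>U\<in>\<K>. U \<inter> K)" using a by (intro openin_Union) auto
    moreover have "(\<Union>U\<in>\<K>. U \<inter> K) = \<Union>\<K> \<inter> K" by blast
    ultimately show "openin (subtopology X K) (\<Union>\<K> \<inter> K)" by simp
  qed (use a in auto)
  show ?thesis unfolding istopology_def using 1 2 by blast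
qed

lemma openin_kify:
  "openin (kify X) U \<longleftrightarrow> U \<subseteq> topspace X \<and>
      (\<forall>K. compactin X K \<longrightarrow> openin (subtopology X K) (U \<inter> K))"
  unfolding kify_def by (simp only: topology_inverse'[OF istopology_kify])

lemma openin_imp_kify: "openin X U \<Longrightarrow> openin (kify X) U"
  unfolding openin_kify using openin_subset openin_subtopology_Int by blast

lemma topspace_kify [simp]: "topspace (kify X) = topspace X"
proof -
  have "openin (kify X) (topspace X)" by (simp add: openin_imp_kify)
  moreover have "openin (kify X) U \<Longrightarrow> U \<subseteq> topspace X" for U by (simp add: openin_kify)
  ultimately show ?thesis by (metis openin_subset subset_antisym openin_topspace)
qed

lemma continuous_map_kify_id: "continuous_map (kify X) X id"
  unfolding continuous_map_def
proof (intro conjI allI impI)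
  fix U assume "openin X U"
  moreover have "{x \<in> topspace (kify X). id x \<in> U} = U" using openin_subset[OF \<open>openin X U\<close>] by auto
  ultimately show "openin (kify X) {x \<in> topspace (kify X). id x \<in> U}" by (simp add: openin_imp_kify)
qed auto

lemma continuous_map_from_kify: "continuous_map X Y f \<Longrightarrow> continuous_map (kify X) Y f"
  using continuous_map_compose[OF continuous_map_kify_id] by (metis comp_id)

lemma kify_kspace: "kspace X \<Longrightarrow> kify X = X"
  unfolding topology_eq
  by (metis kspace_def openin_imp_kify openin_kify)

lemma continuous_map_kify_lemmaA:
  assumes "\<And>K. compactin X K \<Longrightarrow> continuous_map (subtopology X K) Y f"
    and "f ` topspace X \<subseteq> topspace Y"
  shows "continuous_map (kify X) Y f"
  unfolding continuous_map_def
proof (intro conjI allI impI)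
  fix U assume U: "openin Y U"
  show "openin (kify X) {x \<in> topspace (kify X). f x \<in> U}"
    unfolding openin_kify
  proof (intro conjI allI impI)
    fix K assume K: "compactin X K"
    have "openin (subtopology X K) {x \<in> topspace (subtopology X K). f x \<in> U}"
      using openin_continuous_map_preimage[OF assms(1)[OF K] U] .
    moreover have "{x \<in> topspace (subtopology X K). f x \<in> U} = {x \<in> topspace (kify X). f x \<in> U} \<inter> K"
      by auto
    ultimately show "openin (subtopology X K) ({x \<in> topspace (kify X). f x \<in> U} \<inter> K)" by simp
  qed auto
qed (use assms in auto)

lemma continuous_map_into_kify_compact:
  assumes "compact_space Z" "continuous_map Z Y h"
  shows "continuous_map Z (kify Y) h"
  unfolding continuous_map_def
proof (intro conjI allI impI)
  show "h \<in> topspace Z \<rightarrow> topspace (kify Y)" using continuous_map_funspace[OF assms(2)] by simp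
next
  fix U assume U: "openin (kify Y) U"
  have c: "compactin Y (h ` topspace Z)"
    using image_compactin[OF assms(1)[unfolded compact_space_def] assms(2)] .
  then have "openin (subtopology Y (h ` topspace Z)) (U \<inter> h ` topspace Z)"
    using U unfolding openin_kify by blast
  moreover have "continuous_map Z (subtopology Y (h ` topspace Z)) h"
    using assms(2) by (simp add: continuous_map_in_subtopology)
  ultimately have "openin Z {x \<in> topspace Z. h x \<in> U \<inter> h ` topspace Z}"
    by (rule openin_continuous_map_preimage[rotated])
  moreover have "{x \<in> topspace Z. h x \<in> U \<inter> h ` topspace Z} = {x \<in> topspace Z. h x \<in> U}" by auto
  ultimately show "openin Z {x \<in> topspace Z. h x \<in> U}" by simp
qed

lemma continuous_map_kify_lemmaB:
  assumes "\<And>K. compactin X K \<Longrightarrow> continuous_map (subtopology X K) Y f"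
    and "f ` topspace X \<subseteq> topspace Y"
  shows "continuous_map (kify X) (kify Y) f"
proof (rule continuous_map_kify_lemmaA)
  fix K assume "compactin X K"
  then show "continuous_map (subtopology X K) (kify Y) f"
    by (intro continuous_map_into_kify_compact compact_space_subtopology assms(1))
next
  show "f ` topspace X \<subseteq> topspace (kify Y)" using assms(2) by simp
qed

lemma continuous_map_kify_functor:
  assumes c: "continuous_map X Y f"
  shows "continuous_map (kify X) (kify Y) f"
proof (rule continuous_map_kify_lemmaB)
  show "continuous_map (subtopology X K) Y f" for K
    using c by (rule continuous_map_from_subtopology)
  show "f ` topspace X \<subseteq> topspace Y" using c by (rule continuous_map_image_subset_topspace)
qed

lemma topspace_compact_open [simp]: "topspace (compact_open X Y) = cmaps X Y"
  unfolding compact_open_def topology_generated_by_topspace by auto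

lemma openin_compact_open_basic:
  "compactin X K \<Longrightarrow> openin Y U \<Longrightarrow> openin (compact_open X Y) {f \<in> cmaps X Y. f ` K \<subseteq> U}"
  unfolding compact_open_def by (rule topology_generated_by_Basis) blast

lemma eval_continuous:
  assumes "Hausdorff_space X" "compactin X K"
  shows "continuous_map (prod_topology (compact_open X Y) (subtopology X K)) Y (\<lambda>(F,m). F m)"
  unfolding continuous_map_def
proof (intro conjI allI impI)
  show "(\<lambda>(F,m). F m) \<in> topspace (prod_topology (compact_open X Y) (subtopology X K)) \<rightarrow> topspace Y"
    by (auto simp: cmaps_def continuous_map_def)
next
  fix U assume U: "openin Y U"
  let ?T = "prod_topology (compact_open X Y) (subtopology X K)"
  show "openin ?T {z \<in> topspace ?T. (\<lambda>(F,m). F m) z \<in> U}"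
  proof (subst openin_subopen, intro ballI)
    fix z assume z: "z \<in> {z \<in> topspace ?T. (\<lambda>(F,m). F m) z \<in> U}"
    obtain F0 m0 where z0: "z = (F0, m0)" by fastforce
    have F0: "F0 \<in> cmaps X Y" and m0: "m0 \<in> topspace X \<inter> K" and F0m0: "F0 m0 \<in> U"
      using z z0 by auto
    have cF0: "continuous_map (subtopology X K) Y F0"
      using F0 by (simp add: cmaps_def continuous_map_from_subtopology)
    define Ob0 where "Ob0 = {m \<in> topspace (subtopology X K). F0 m \<in> U}"
    have O: "openin (subtopology X K) Ob0" "m0 \<in> Ob0"
      using cF0 U m0 F0m0 by (auto simp: Ob0_def continuous_map_def)
    have "regular_space (subtopology X K)"
      by (simp add: assms compact_Hausdorff_imp_regular_space compact_space_subtopology Hausdorff_space_subtopology)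
    then obtain N Cl where N: "openin (subtopology X K) N" "closedin (subtopology X K) Cl"
      "m0 \<in> N" "N \<subseteq> Cl" "Cl \<subseteq> Ob0"
      using O unfolding neighbourhood_base_of_closedin[symmetric] neighbourhood_base_of by meson
    have "compactin (subtopology X K) Cl"
      using N(2) assms(2) closedin_compact_space compact_space_subtopology by blast
    then have cCl: "compactin X Cl" by (simp add: compactin_subtopology)
    define G where "G = {f \<in> cmaps X Y. f ` Cl \<subseteq> U}"
    have G: "openin (compact_open X Y) G" unfolding G_def
      using openin_compact_open_basic[OF cCl U] .
    have "openin ?T (G \<times> N)" using G N(1) by (simp add: openin_prod_Times_iff)
    moreover have "z \<in> G \<times> N" using z0 F0 N Ob0_def by (auto simp: G_def)
    moreover have "G \<times> N \<subseteq> {z \<in> topspace ?T. (\<lambda>(F,m). F m) z \<in> U}"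
      using N(4) openin_subset[OF N(1)] by (auto simp: G_def image_subset_iff subset_iff)
    ultimately show "\<exists>T. openin ?T T \<and> z \<in> T \<and> T \<subseteq> {z \<in> topspace ?T. (\<lambda>(F,m). F m) z \<in> U}"
      by blast
  qed
qed

lemma topspace_kprod [simp]: "topspace (kprod X Y) = topspace X \<times> topspace Y"
  by (simp add: kprod_def)

definition ntr where
  "ntr C D \<psi> F G = (\<lambda>x\<in>Ob C. \<psi> (fob C D F x, fob C D G x))"

lemma fob_cont:
  assumes "kcategory C" "kcategory D" "F \<in> functors C D"
  shows "continuous_map (obT C) (obT D) (fob C D F)"
proof -
  have "fob C D F = src D \<circ> (F \<circ> ident C)" by (auto simp: fob_def fun_eq_iff)
  moreover have "continuous_map (morT C) (morT D) F" using assms(3) by (simp add: functors_def)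
  moreover have "continuous_map (morT D) (obT D) (src D)" "continuous_map (obT C) (morT C) (ident C)"
    using assms(1,2) unfolding kcategory_def by auto
  ultimately show ?thesis
    by (metis continuous_map_compose[of "obT C" "morT C" "ident C" "morT D" F]
              continuous_map_compose[of "obT C" "morT D" "F \<circ> ident C" "obT D" "src D"])
qed

lemma fob_in: "F \<in> functors C D \<Longrightarrow> x \<in> Ob C \<Longrightarrow> fob C D F x \<in> Ob D"
  by (simp add: functors_def)

lemma ntr_cont:
  assumes C: "kcategory C" and D: "kcategory D"
    and h: "homeomorphic_maps (morT D) (kprod (obT D) (obT D)) (\<lambda>f. (src D f, tgt D f)) \<psi>"
    and F: "F \<in> functors C D" and G: "G \<in> functors C D"
  shows "continuous_map (obT C) (morT D) (ntr C D \<psi> F G)"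
proof -
  have hpsi: "continuous_map (kprod (obT D) (obT D)) (morT D) \<psi>" using h by (simp add: homeomorphic_maps_def)
  have "continuous_map (obT C) (prod_topology (obT D) (obT D)) (\<lambda>x. (fob C D F x, fob C D G x))"
    using fob_cont[OF C D F] fob_cont[OF C D G] by (simp add: continuous_map_paired)
  then have "continuous_map (kify (obT C)) (kprod (obT D) (obT D)) (\<lambda>x. (fob C D F x, fob C D G x))"
    unfolding kprod_def by (rule continuous_map_kify_functor)
  then have "continuous_map (obT C) (kprod (obT D) (obT D)) (\<lambda>x. (fob C D F x, fob C D G x))"
    using kify_kspace[of "obT C"] C by (simp add: kcategory_def)
  then have "continuous_map (obT C) (morT D) (\<psi> \<circ> (\<lambda>x. (fob C D F x, fob C D G x)))"
    using hpsi by (rule continuous_map_compose)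
  then show ?thesis
    by (rule continuous_map_eq) (simp add: ntr_def)
qed

lemma ntr_nat_trans:
  assumes C: "kcategory C" and D: "kcategory D"
    and h: "homeomorphic_maps (morT D) (kprod (obT D) (obT D)) (\<lambda>f. (src D f, tgt D f)) \<psi>"
    and F: "F \<in> functors C D" and G: "G \<in> functors C D"
  shows "nat_trans C D F G (ntr C D \<psi> F G)"
proof -
  have inv1: "\<And>q. q \<in> Ob D \<times> Ob D \<Longrightarrow> (src D (\<psi> q), tgt D (\<psi> q)) = q"
    and psiM: "\<And>q. q \<in> Ob D \<times> Ob D \<Longrightarrow> \<psi> q \<in> Mor D"
    and inj: "\<And>f g. f \<in> Mor D \<Longrightarrow> g \<in> Mor D \<Longrightarrow> src D f = src D g \<Longrightarrow> tgt D f = tgt D g \<Longrightarrow> f = g"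
  proof -
    have h1: "\<forall>y\<in>Ob D \<times> Ob D. (src D (\<psi> y), tgt D (\<psi> y)) = y" "\<forall>x\<in>Mor D. \<psi> (src D x, tgt D x) = x"
      and h2: "continuous_map (kprod (obT D) (obT D)) (morT D) \<psi>"
      using h unfolding homeomorphic_maps_def by auto
    show "\<And>q. q \<in> Ob D \<times> Ob D \<Longrightarrow> (src D (\<psi> q), tgt D (\<psi> q)) = q" using h1 by blast
    show "\<And>q. q \<in> Ob D \<times> Ob D \<Longrightarrow> \<psi> q \<in> Mor D" using continuous_map_funspace[OF h2] by auto
    show "\<And>f g. f \<in> Mor D \<Longrightarrow> g \<in> Mor D \<Longrightarrow> src D f = src D g \<Longrightarrow> tgt D f = tgt D g \<Longrightarrow> f = g"
      using h1(2) by metis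
  qed
  have sC: "\<And>f. f \<in> Mor C \<Longrightarrow> src C f \<in> Ob C \<and> tgt C f \<in> Ob C"
    using C unfolding kcategory_def continuous_map_def by (auto simp: Pi_iff)
  have FM: "\<And>f. f \<in> Mor C \<Longrightarrow> F f \<in> Mor D \<and> G f \<in> Mor D"
    using F G unfolding functors_def continuous_map_def by (auto simp: Pi_iff)
  have Fs: "\<And>f. f \<in> Mor C \<Longrightarrow> src D (F f) = fob C D F (src C f) \<and> tgt D (F f) = fob C D F (tgt C f)"
    "\<And>f. f \<in> Mor C \<Longrightarrow> src D (G f) = fob C D G (src C f) \<and> tgt D (G f) = fob C D G (tgt C f)"
    using F G unfolding functors_def by auto
  have eta: "\<And>x. x \<in> Ob C \<Longrightarrow> ntr C D \<psi> F G x \<in> Mor D \<and> src D (ntr C D \<psi> F G x) = fob C D F x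
        \<and> tgt D (ntr C D \<psi> F G x) = fob C D G x"
    using inv1 psiM fob_in[OF F] fob_in[OF G] by (auto simp: ntr_def)
  have compM: "\<And>g f. (g, f) \<in> composable D \<Longrightarrow> comp D g f \<in> Mor D"
  proof -
    fix g f assume gf: "(g, f) \<in> composable D"
    have "continuous_map (subtopology (kprod (morT D) (morT D)) (composable D)) (morT D) (\<lambda>(g, f). comp D g f)"
      using D unfolding kcategory_def by blast
    moreover have "(g, f) \<in> topspace (subtopology (kprod (morT D) (morT D)) (composable D))"
      using gf by (auto simp: composable_def)
    ultimately have "(\<lambda>(g, f). comp D g f) (g, f) \<in> Mor D"
      by (rule continuous_map_funspace[THEN funcset_mem])
    then show "comp D g f \<in> Mor D" by simp
  qed
  have compST: "\<And>g f. (g, f) \<in> composable D \<Longrightarrow> src D (comp D g f) = src D f \<and> tgt D (comp D g f) = tgt D g"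
    using D unfolding kcategory_def by auto
  show ?thesis
    unfolding nat_trans_def
  proof (intro conjI ballI)
    show "ntr C D \<psi> F G \<in> extensional (Ob C)" by (simp add: ntr_def)
    show "continuous_map (obT C) (morT D) (ntr C D \<psi> F G)" using ntr_cont[OF assms] .
  next
    fix f assume f: "f \<in> Mor C"
    have c1: "(ntr C D \<psi> F G (tgt C f), F f) \<in> composable D"
      using eta sC f FM Fs by (auto simp: composable_def)
    have c2: "(G f, ntr C D \<psi> F G (src C f)) \<in> composable D"
      using eta sC f FM Fs by (auto simp: composable_def)
    show "comp D (ntr C D \<psi> F G (tgt C f)) (F f) = comp D (G f) (ntr C D \<psi> F G (src C f))"
      apply (rule inj)
      using compM[OF c1] compM[OF c2] compST[OF c1] compST[OF c2] eta sC f FM Fs by auto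
  qed (use eta in auto)
qed

lemma nat_trans_unique:
  assumes C: "kcategory C" and D: "kcategory D"
    and h: "homeomorphic_maps (morT D) (kprod (obT D) (obT D)) (\<lambda>f. (src D f, tgt D f)) \<psi>"
    and n: "nat_trans C D F G \<eta>"
  shows "\<eta> = ntr C D \<psi> F G"
proof
  fix x show "\<eta> x = ntr C D \<psi> F G x"
  proof (cases "x \<in> Ob C")
    case True
    have "\<eta> x \<in> Mor D" using n True unfolding nat_trans_def continuous_map_def by auto
    then have "\<psi> (src D (\<eta> x), tgt D (\<eta> x)) = \<eta> x"
      using h unfolding homeomorphic_maps_def by auto
    then show ?thesis using n True unfolding nat_trans_def ntr_def by auto
  next
    case False
    then show ?thesis using n unfolding nat_trans_def ntr_def extensional_def by auto
  qed
qed

lemma topspace_FuncObT [simp]: "topspace (FuncObT C D) = functors C D"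
  by (auto simp: FuncObT_def kmap_def cmaps_def functors_def)

lemma FuncObT_to_CO: "continuous_map (FuncObT C D) (compact_open (morT C) (morT D)) id"
  unfolding FuncObT_def kmap_def
  by (rule continuous_map_from_subtopology) (rule continuous_map_kify_id)

lemma key_cont:
  assumes C: "kcategory C" and D: "kcategory D"
    and h: "homeomorphic_maps (morT D) (kprod (obT D) (obT D)) (\<lambda>f. (src D f, tgt D f)) \<psi>"
    and KK: "compactin (prod_topology (FuncObT C D) (FuncObT C D)) KK"
  shows "continuous_map (subtopology (prod_topology (FuncObT C D) (FuncObT C D)) KK)
           (compact_open (obT C) (morT D)) (\<lambda>(F,G). ntr C D \<psi> F G)"
proof -
  let ?Fo = "FuncObT C D"
  let ?Z = "subtopology (prod_topology ?Fo ?Fo) KK"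
  have tZ: "topspace ?Z \<subseteq> functors C D \<times> functors C D" by auto
  have cZ: "compact_space ?Z" using KK by (rule compact_space_subtopology)
  have ntr_cm: "ntr C D \<psi> F G \<in> cmaps (obT C) (morT D)" if "(F,G) \<in> topspace ?Z" for F G
    using that tZ ntr_cont[OF C D h] by (auto simp: cmaps_def ntr_def)
  have HC: "Hausdorff_space (morT C)" using C by (simp add: kcategory_def kspace_def)
  have fobE: "continuous_map (prod_topology ?Z (subtopology (obT C) K)) (obT D)
       (\<lambda>((F,G),x). fob C D (sel (F,G)) x)"
    if K: "compactin (obT C) K" and sel: "continuous_map ?Z ?Fo sel" for K sel
  proof -
    let ?K' = "ident C ` K"
    have ci: "continuous_map (obT C) (morT C) (ident C)" using C by (simp add: kcategory_def)
    have cK': "compactin (morT C) ?K'" using image_compactin[OF K ci] .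
    have a: "continuous_map (prod_topology ?Z (subtopology (obT C) K))
       (prod_topology (compact_open (morT C) (morT D)) (subtopology (morT C) ?K'))
       (\<lambda>((F,G),x). (sel (F,G), ident C x))"
    proof -
      have 1: "continuous_map (prod_topology ?Z (subtopology (obT C) K)) (compact_open (morT C) (morT D))
          (id \<circ> sel \<circ> fst)"
        by (rule continuous_map_compose[OF continuous_map_fst continuous_map_compose[OF sel FuncObT_to_CO]])
      have 2: "continuous_map (subtopology (obT C) K) (subtopology (morT C) ?K') (ident C)"
        using ci by (auto simp: continuous_map_in_subtopology continuous_map_from_subtopology)
      have 3: "continuous_map (prod_topology ?Z (subtopology (obT C) K)) (subtopology (morT C) ?K')
          (ident C \<circ> snd)"
        by (intro continuous_map_compose[OF continuous_map_snd 2])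
      have "continuous_map (prod_topology ?Z (subtopology (obT C) K))
       (prod_topology (compact_open (morT C) (morT D)) (subtopology (morT C) ?K'))
       (\<lambda>z. ((id \<circ> sel \<circ> fst) z, (ident C \<circ> snd) z))"
        using 1 3 unfolding comp_def id_def continuous_map_paired by blast
      then show ?thesis by (simp add: case_prod_unfold)
    qed
    have b: "continuous_map (prod_topology (compact_open (morT C) (morT D)) (subtopology (morT C) ?K'))
       (obT D) (src D \<circ> (\<lambda>(F,m). F m))"
      using eval_continuous[OF HC cK'] D by (intro continuous_map_compose) (auto simp: kcategory_def)
    have "continuous_map (prod_topology ?Z (subtopology (obT C) K)) (obT D)
        ((src D \<circ> (\<lambda>(F,m). F m)) \<circ> (\<lambda>((F,G),x). (sel (F,G), ident C x)))"
      using a b by (rule continuous_map_compose)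
    then show ?thesis by (simp add: fob_def case_prod_unfold o_def)
  qed
  show ?thesis
    unfolding compact_open_def
  proof (rule continuous_on_generated_topo)
    show "(\<lambda>(F,G). ntr C D \<psi> F G) ` topspace ?Z \<subseteq> \<Union>(insert (cmaps (obT C) (morT D))
        {{f \<in> cmaps (obT C) (morT D). f ` K \<subseteq> U} |K U. compactin (obT C) K \<and> openin (morT D) U})"
      using ntr_cm by auto
  next
    fix S assume "S \<in> insert (cmaps (obT C) (morT D))
        {{f \<in> cmaps (obT C) (morT D). f ` K \<subseteq> U} |K U. compactin (obT C) K \<and> openin (morT D) U}"
    then consider "S = cmaps (obT C) (morT D)"
      | K U where "S = {f \<in> cmaps (obT C) (morT D). f ` K \<subseteq> U}" "compactin (obT C) K" "openin (morT D) U"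
      by blast
    then show "openin ?Z ((\<lambda>(F,G). ntr C D \<psi> F G) -` S \<inter> topspace ?Z)"
    proof cases
      case 1
      then have "(\<lambda>(F,G). ntr C D \<psi> F G) -` S \<inter> topspace ?Z = topspace ?Z" using ntr_cm by auto
      then show ?thesis by (metis openin_topspace)
    next
      case 2
      note K = 2(2) and U = 2(3)
      let ?P = "prod_topology ?Z (subtopology (obT C) K)"
      define E where "E = (\<lambda>((F,G),x). (fob C D F x, fob C D G x))"
      have s1: "continuous_map ?Z ?Fo fst"
        by (rule continuous_map_from_subtopology) (rule continuous_map_fst)
      have s2: "continuous_map ?Z ?Fo snd"
        by (rule continuous_map_from_subtopology) (rule continuous_map_snd)
      have cE: "continuous_map ?P (prod_topology (obT D) (obT D)) E"
        using fobE[OF K s1] fobE[OF K s2] unfolding E_def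
        by (simp add: continuous_map_paired case_prod_unfold)
      have cP: "compact_space ?P"
        using cZ K by (simp add: compact_space_prod_topology compact_space_subtopology)
      define L where "L = E ` topspace ?P"
      have cL: "compactin (prod_topology (obT D) (obT D)) L"
        unfolding L_def using cP cE image_compactin compact_space_def by blast
      define W where "W = {q \<in> topspace (kprod (obT D) (obT D)). \<psi> q \<in> U}"
      have "openin (kprod (obT D) (obT D)) W"
        using h U unfolding homeomorphic_maps_def continuous_map_def W_def by blast
      then have "openin (subtopology (prod_topology (obT D) (obT D)) L) (W \<inter> L)"
        using cL unfolding kprod_def openin_kify by blast
      then obtain V where V: "openin (prod_topology (obT D) (obT D)) V" "W \<inter> L = V \<inter> L"
        by (auto simp: openin_subtopology)
      have KO: "K \<subseteq> Ob C" using K compactin_subset_topspace by blast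
      have Ein: "E (z,x) \<in> L" if "z \<in> topspace ?Z" "x \<in> K" for z x
        unfolding L_def using that KO by auto
      have EOb: "E (z,x) \<in> Ob D \<times> Ob D" if "z \<in> topspace ?Z" "x \<in> K" for z x
        using that KO tZ fob_in unfolding E_def by (cases z) fastforce
      have eq: "(\<lambda>(F,G). ntr C D \<psi> F G) -` S \<inter> topspace ?Z =
          topspace ?Z - fst ` {p \<in> topspace ?P. E p \<in> topspace (prod_topology (obT D) (obT D)) - V}"
      proof -
        have "(\<lambda>(F,G). ntr C D \<psi> F G) z \<in> S \<longleftrightarrow> (\<forall>x\<in>K. E (z,x) \<in> V)" if z: "z \<in> topspace ?Z" for z
        proof -
          have "(\<lambda>(F,G). ntr C D \<psi> F G) z \<in> S \<longleftrightarrow> (\<forall>x\<in>K. \<psi> (E (z,x)) \<in> U)"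
            using ntr_cm z KO 2(1) by (cases z) (auto simp: ntr_def E_def image_subset_iff subset_iff)
          also have "\<dots> \<longleftrightarrow> (\<forall>x\<in>K. E (z,x) \<in> W)"
            using EOb z by (auto simp: W_def)
          also have "\<dots> \<longleftrightarrow> (\<forall>x\<in>K. E (z,x) \<in> V)"
            using Ein z V(2) by blast
          finally show ?thesis .
        qed
        moreover have "E (z,x) \<in> topspace (prod_topology (obT D) (obT D))" if "z \<in> topspace ?Z" "x \<in> K" for z x
          using EOb that by simp
        moreover have "fst ` {p \<in> topspace ?P. E p \<in> topspace (prod_topology (obT D) (obT D)) - V}
            = {z \<in> topspace ?Z. \<exists>x\<in>K. E (z,x) \<notin> V}"
        proof
          show "fst ` {p \<in> topspace ?P. E p \<in> topspace (prod_topology (obT D) (obT D)) - V}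
            \<subseteq> {z \<in> topspace ?Z. \<exists>x\<in>K. E (z,x) \<notin> V}"
            by force
        next
          show "{z \<in> topspace ?Z. \<exists>x\<in>K. E (z,x) \<notin> V} \<subseteq>
             fst ` {p \<in> topspace ?P. E p \<in> topspace (prod_topology (obT D) (obT D)) - V}"
          proof
            fix z assume "z \<in> {z \<in> topspace ?Z. \<exists>x\<in>K. E (z,x) \<notin> V}"
            then obtain x where zx: "z \<in> topspace ?Z" "x \<in> K" "E (z,x) \<notin> V" by blast
            have "(z,x) \<in> {p \<in> topspace ?P. E p \<in> topspace (prod_topology (obT D) (obT D)) - V}"
              using zx KO EOb[OF zx(1,2)] by auto
            then show "z \<in> fst ` {p \<in> topspace ?P. E p \<in> topspace (prod_topology (obT D) (obT D)) - V}"
              by (rule rev_image_eqI) simp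
          qed
        qed
        ultimately show ?thesis by auto
      qed
      have "closedin ?P {p \<in> topspace ?P. E p \<in> topspace (prod_topology (obT D) (obT D)) - V}"
        using cE closedin_diff[OF closedin_topspace V(1)] by (rule closedin_continuous_map_preimage)
      then have "closedin ?Z (fst ` {p \<in> topspace ?P. E p \<in> topspace (prod_topology (obT D) (obT D)) - V})"
        using closed_map_fst[of "subtopology (obT C) K" ?Z] K compact_space_subtopology
        unfolding closed_map_def by blast
      then show ?thesis unfolding eq by (rule openin_diff[OF openin_topspace])
    qed
  qed
qed

lemma Func_simps:
  "obT (Func C D) = FuncObT C D"
  "morT (Func C D) = subtopology (kprod (FuncObT C D) (kprod (FuncObT C D) (kmap (obT C) (morT D))))
                {(F, G, \<eta>). F \<in> functors C D \<and> G \<in> functors C D \<and> nat_trans C D F G \<eta>}"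
  "src (Func C D) = (\<lambda>(F, G, \<eta>). F)"
  "tgt (Func C D) = (\<lambda>(F, G, \<eta>). G)"
  by (simp_all add: Func_def)

lemma comp_in_Mor:
  assumes D: "kcategory D"
  shows "\<And>g f. (g, f) \<in> composable D \<Longrightarrow> comp D g f \<in> Mor D"
  proof -
    fix g f assume gf: "(g, f) \<in> composable D"
    have "continuous_map (subtopology (kprod (morT D) (morT D)) (composable D)) (morT D) (\<lambda>(g, f). comp D g f)"
      using D unfolding kcategory_def by blast
    moreover have "(g, f) \<in> topspace (subtopology (kprod (morT D) (morT D)) (composable D))"
      using gf by (auto simp: composable_def)
    ultimately have "(\<lambda>(g, f). comp D g f) (g, f) \<in> Mor D"
      by (rule continuous_map_funspace[THEN funcset_mem])
    then show "comp D g f \<in> Mor D" by simp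
  qed

lemma const_functor:
  assumes C: "kcategory C" and D: "kcategory D" and d: "d \<in> Ob D"
  shows "(\<lambda>f\<in>Mor C. ident D d) \<in> functors C D"
proof -
  have iM: "ident D d \<in> Mor D" and st: "src D (ident D d) = d" "tgt D (ident D d) = d"
    using D d unfolding kcategory_def continuous_map_def by (auto simp: Pi_iff)
  have "comp D (ident D d) (ident D (src D (ident D d))) = ident D d"
    using D iM unfolding kcategory_def by blast
  then have cc: "comp D (ident D d) (ident D d) = ident D d" using st by simp
  have iC: "\<And>x. x \<in> Ob C \<Longrightarrow> ident C x \<in> Mor C"
    and sC: "\<And>f. f \<in> Mor C \<Longrightarrow> src C f \<in> Ob C \<and> tgt C f \<in> Ob C"
    using C unfolding kcategory_def continuous_map_def by (auto simp: Pi_iff)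
  have cM: "\<And>g f. (g, f) \<in> composable C \<Longrightarrow> comp C g f \<in> Mor C"
    using comp_in_Mor[OF C] .
  have cont: "continuous_map (morT C) (morT D) (\<lambda>f\<in>Mor C. ident D d)"
    by (rule continuous_map_eq[OF continuous_map_const[THEN iffD2]]) (use iM in auto)
  show ?thesis
    unfolding functors_def using cont iM st cc iC sC cM d
    by (auto simp: fob_def composable_def)
qed

theorem mainTheorem5:
  fixes C :: "('oc, 'mc) kcat" and D :: "('od, 'md) kcat"
  assumes "kcategory C" and "Ob C \<noteq> {}"
    and "kcategory D" and "perfect D"
  shows "perfect (Func C D)"
proof -
  note C = assms(1) and D = assms(3)
  obtain \<psi> where h: "homeomorphic_maps (morT D) (kprod (obT D) (obT D)) (\<lambda>f. (src D f, tgt D f)) \<psi>"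
    using assms(4) unfolding perfect_def homeomorphic_map_maps by blast
  obtain d where d: "d \<in> Ob D" using assms(4) unfolding perfect_def by blast
  let ?Fo = "FuncObT C D"
  let ?M = "kmap (obT C) (morT D)"
  let ?S = "{(F, G, \<eta>). F \<in> functors C D \<and> G \<in> functors C D \<and> nat_trans C D F G \<eta>}"
  let ?T = "subtopology (kprod ?Fo (kprod ?Fo ?M)) ?S"
  define s where "s = (\<lambda>(F,G). (F, G, ntr C D \<psi> F G))"
  have ne: "Ob (Func C D) \<noteq> {}"
    using const_functor[OF C D d] by (auto simp: Func_simps)
  have tM: "topspace ?M = cmaps (obT C) (morT D)" by (simp add: kmap_def)
  have natcm: "nat_trans C D F G \<eta> \<Longrightarrow> \<eta> \<in> cmaps (obT C) (morT D)" for F G \<eta>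
    by (simp add: nat_trans_def cmaps_def)
  have tT: "topspace ?T = ?S" using natcm by (auto simp: tM)
  have c1: "continuous_map ?T (kprod ?Fo ?Fo) (\<lambda>f. (src (Func C D) f, tgt (Func C D) f))"
  proof -
    have a: "continuous_map (kprod ?Fo ?M) ?Fo fst"
      unfolding kprod_def by (intro continuous_map_from_kify continuous_map_fst)
    have "continuous_map (prod_topology ?Fo (kprod ?Fo ?M)) (prod_topology ?Fo ?Fo)
        (\<lambda>z. (fst z, (fst \<circ> snd) z))"
    proof -
      have b: "continuous_map (prod_topology ?Fo (kprod ?Fo ?M)) ?Fo (\<lambda>z. fst (snd z))"
        using continuous_map_compose[OF continuous_map_snd[of ?Fo "kprod ?Fo ?M"] a] by (simp add: o_def)
      show ?thesis using b continuous_map_fst[of ?Fo "kprod ?Fo ?M"]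
        by (simp add: continuous_map_paired comp_def)
    qed
    then have "continuous_map (kprod ?Fo (kprod ?Fo ?M)) (kprod ?Fo ?Fo) (\<lambda>z. (fst z, (fst \<circ> snd) z))"
      unfolding kprod_def[of ?Fo "kprod ?Fo ?M"] kprod_def[of ?Fo ?Fo]
      by (rule continuous_map_kify_functor)
    then have "continuous_map ?T (kprod ?Fo ?Fo) (\<lambda>z. (fst z, (fst \<circ> snd) z))"
      by (rule continuous_map_from_subtopology)
    then show ?thesis
      by (rule continuous_map_eq) (auto simp: Func_simps)
  qed
  have c2: "continuous_map (kprod ?Fo ?Fo) ?T s"
  proof (rule continuous_map_into_subtopology)
    show "continuous_map (kprod ?Fo ?Fo) (kprod ?Fo (kprod ?Fo ?M)) s"
      unfolding kprod_def[of ?Fo ?Fo] kprod_def[of ?Fo "kprod ?Fo ?M"]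
    proof (rule continuous_map_kify_lemmaB)
      fix KK assume KK: "compactin (prod_topology ?Fo ?Fo) KK"
      let ?Z = "subtopology (prod_topology ?Fo ?Fo) KK"
      have cZ: "compact_space ?Z" using KK by (rule compact_space_subtopology)
      have k: "continuous_map ?Z ?M (\<lambda>(F,G). ntr C D \<psi> F G)"
        unfolding kmap_def by (rule continuous_map_into_kify_compact[OF cZ key_cont[OF C D h KK]])
      have s1: "continuous_map ?Z ?Fo fst"
        by (rule continuous_map_from_subtopology) (rule continuous_map_fst)
      have s2: "continuous_map ?Z ?Fo snd"
        by (rule continuous_map_from_subtopology) (rule continuous_map_snd)
      have "continuous_map ?Z (prod_topology ?Fo ?M) (\<lambda>z. (snd z, (\<lambda>(F,G). ntr C D \<psi> F G) z))"
        using s2 k by (simp add: continuous_map_paired)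
      then have "continuous_map ?Z (kprod ?Fo ?M) (\<lambda>z. (snd z, (\<lambda>(F,G). ntr C D \<psi> F G) z))"
        unfolding kprod_def by (rule continuous_map_into_kify_compact[OF cZ])
      then have "continuous_map ?Z (prod_topology ?Fo (kprod ?Fo ?M))
          (\<lambda>z. (fst z, (snd z, (\<lambda>(F,G). ntr C D \<psi> F G) z)))"
        using s1 by (simp add: continuous_map_paired)
      then show "continuous_map ?Z (prod_topology ?Fo (kprod ?Fo ?M)) s"
        by (rule continuous_map_eq) (auto simp: s_def)
    next
      show "s ` topspace (prod_topology ?Fo ?Fo) \<subseteq> topspace (prod_topology ?Fo (kprod ?Fo ?M))"
        using ntr_cont[OF C D h] by (auto simp: s_def tM cmaps_def ntr_def)
    qed
  next
    show "s \<in> topspace (kprod ?Fo ?Fo) \<rightarrow> ?S"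
      using ntr_nat_trans[OF C D h] by (auto simp: s_def)
  qed
  have "homeomorphic_maps ?T (kprod ?Fo ?Fo) (\<lambda>f. (src (Func C D) f, tgt (Func C D) f)) s"
    unfolding homeomorphic_maps_def
  proof (intro conjI ballI)
    fix x assume "x \<in> topspace ?T"
    then show "s (src (Func C D) x, tgt (Func C D) x) = x"
      using nat_trans_unique[OF C D h] unfolding tT by (auto simp: s_def Func_simps)
  next
    fix y assume "y \<in> topspace (kprod ?Fo ?Fo)"
    then show "(src (Func C D) (s y), tgt (Func C D) (s y)) = y"
      by (auto simp: s_def Func_simps)
  qed (use c1 c2 in auto)
  then show ?thesis
    unfolding perfect_def homeomorphic_map_maps using ne by (auto simp: Func_simps)
qed

end
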